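(* Let $p$ be a prime, $A$ a torsion-free $\mathbb{Z}_{(p)}$-algebra, $\mathfrak a\subseteq A$ a divided-power ideal, and $P,Q\in A[X]$ monic polynomials. The following are equivalent: (1) $e_n(P)\equiv e_n(Q)\pmod{\mathfrak a}$ for every $n\ge1$; (2) $e_n(P)\equiv e_n(Q)\pmod{\mathfrak a}$ for every $n$ with $1\le n\le\max\{\deg P,\deg Q\}$; (3) $p_n(P)\equiv p_n(Q)\pmod{n\mathfrak a}$ for every $n\ge 1$; (4) $p_n(P)\equiv p_n(Q)\pmod{n\mathfrak a}$ for every $n$ with $1\le n\le\max\{\deg P,\deg Q\}$.
   Context: $\mathbb{Z}_{(p)}\subseteq\mathbb{Q}$ is the ring of rationals $a/b$ with $p\nmid b$. An ideal $\mathfrak a$ of a torsion-free $\mathbb{Z}_{(p)}$-algebra $A$ is a divided-power ideal if $a^p\in p\,\mathfrak a$ for all $a\in\mathfrak a$ (equivalently $a^k/k!\in\mathfrak a$ in $A\otimes\mathbb{Q}$ for all $a\in\mathfrak a$, $k\ge1$). For a monic $P=X^d+a_1X^{d-1}+\dots+a_d\in A[X]$: $e_0(P)=1$, $e_n(P)=(-1)^na_n$ for $1\le n\le d$, $e_n(P)=0$ for $n>d$; and $p_n(P)$ for $n\ge1$ is defined recursively by Newton's identities $p_n(P)=\sum_{i=1}^{n-1}(-1)^{i-1}e_i(P)p_{n-i}(P)+(-1)^{n-1}n\,e_n(P)$ (when $A$ is a domain, $p_n(P)=\sum_i\alpha_i^n$ over the roots $\alpha_i$ of $P$ with multiplicity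 in an extension). $n\mathfrak a$ denotes the ideal $\{na: a\in\mathfrak a\}$. *)

theory Defs
  imports "HOL-Computational_Algebra.Polynomial" "HOL-Computational_Algebra.Primes"
begin

text \<open>A (commutative) ring is a torsion-free Z_(p)-algebra iff every integer not divisible
  by p is invertible in it (this gives the unique ring map Z_(p) -> A) and it is
  torsion-free as an abelian group.\<close>
definition torsion_free_Zp_algebra :: "nat \<Rightarrow> 'a::comm_ring_1 itself \<Rightarrow> bool" where
  "torsion_free_Zp_algebra p _ \<longleftrightarrow>
     (\<forall>n::int. \<not> int p dvd n \<longrightarrow> (\<exists>b::'a. of_int n * b = 1)) \<and>
     (\<forall>(n::int) (a::'a). n \<noteq> 0 \<longrightarrow> of_int n * a = 0 \<longrightarrow> a = 0)"

definition is_ideal :: "'a::comm_ring_1 set \<Rightarrow> bool" where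
  "is_ideal I \<longleftrightarrow> 0 \<in> I \<and> (\<forall>x\<in>I. \<forall>y\<in>I. x + y \<in> I) \<and> (\<forall>r. \<forall>x\<in>I. r * x \<in> I)"

definition nat_mult_set :: "nat \<Rightarrow> 'a::comm_ring_1 set \<Rightarrow> 'a set" where
  "nat_mult_set n I = {of_nat n * a | a. a \<in> I}"

definition divided_power_ideal :: "nat \<Rightarrow> 'a::comm_ring_1 set \<Rightarrow> bool" where
  "divided_power_ideal p I \<longleftrightarrow> is_ideal I \<and> (\<forall>a\<in>I. a ^ p \<in> nat_mult_set p I)"

text \<open>Elementary symmetric functions of the roots of a monic polynomial:
  e_n(P) = (-1)^n a_n for P = X^d + a_1 X^(d-1) + ... + a_d, e_0 = 1, e_n = 0 for n > d.\<close>
definition esym :: "'a::comm_ring_1 poly \<Rightarrow> nat \<Rightarrow> 'a" where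
  "esym P n = (if n \<le> degree P then (-1) ^ n * coeff P (degree P - n) else 0)"

text \<open>Power sums via Newton's identities (p_0 is not used; set to 0).\<close>
function psum :: "'a::comm_ring_1 poly \<Rightarrow> nat \<Rightarrow> 'a" where
  "psum P n = (if n = 0 then 0 else
     (\<Sum>i\<in>{1..<n}. (-1) ^ (i - 1) * esym P i * psum P (n - i))
     + (-1) ^ (n - 1) * of_nat n * esym P n)"
  by auto
termination by (relation "measure snd") auto

declare psum.simps[simp del]

end

theory Submission
  imports Defs "HOL-Computational_Algebra.Formal_Power_Series"
begin
unbundle fps_syntax

definition DD :: "'a::comm_ring_1 fps \<Rightarrow> 'a fps" where
  "DD f = fps_X * fps_deriv f"

lemma DD_nth: "DD f $ n = of_nat n * f $ n"
  by (cases n) (simp_all add: DD_def)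

lemma DD_mult: "DD (f * g) = DD f * g + f * DD g"
  by (simp add: DD_def algebra_simps)

lemma fact_split:
  assumes "prime p"
  shows "\<exists>w. fact k = p ^ (k div p) * fact (k div p) * w \<and> \<not> p dvd w"
proof (induction k)
  case 0
  then show ?case using assms by (auto simp: prime_gt_1_nat)
next
  case (Suc k)
  then obtain w where w: "fact k = p ^ (k div p) * fact (k div p) * w" "\<not> p dvd w" by blast
  have p1: "p > 1" using assms prime_gt_1_nat by blast
  show ?case
  proof (cases "p dvd Suc k")
    case True
    then obtain q where q: "Suc k = p * q" by blast
    obtain r where r: "p = Suc r" using p1 by (cases p) auto
    obtain s where s: "q = Suc s" using q by (cases q) auto
    have e: "k = r + s * p" using q r s by simp
    have "k div p = s + r div p" using p1 e by simp
    then have kd: "k div p = s" using r by simp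
    have sd: "Suc k div p = Suc s" using q s p1 by simp
    have "fact (Suc k) = Suc k * fact k" by (simp add: fact_Suc)
    also have "\<dots> = (p * Suc s) * (p ^ s * fact s * w)"
      using w kd q s by simp
    also have "\<dots> = p ^ Suc s * fact (Suc s) * w"
      by (simp only: fact_Suc power_Suc of_nat_id mult_ac)
    finally have "fact (Suc k) = p ^ Suc s * fact (Suc s) * w" .
    then have "fact (Suc k) = p ^ (Suc k div p) * fact (Suc k div p) * w" by (simp only: sd)
    then show ?thesis using w(2) by (intro exI[of _ w] conjI)
  next
    case False
    have "Suc k div p = k div p"
      using False p1 by (simp add: div_Suc dvd_eq_mod_eq_0 gr0I)
    have "fact (Suc k) = Suc k * fact k" by (simp only: fact_Suc of_nat_id)
    also have "\<dots> = p ^ (Suc k div p) * fact (Suc k div p) * (w * Suc k)"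
      by (simp only: w(1) \<open>Suc k div p = k div p\<close> mult_ac)
    finally have e: "fact (Suc k) = p ^ (Suc k div p) * fact (Suc k div p) * (w * Suc k)" .
    have "\<not> p dvd w * Suc k" using w(2) False prime_dvd_mult_iff[OF assms] by blast
    then show ?thesis using e by (intro exI[of _ "w * Suc k"] conjI)
  qed
qed


lemma tf_cancel:
  assumes "torsion_free_Zp_algebra p TYPE('a::comm_ring_1)" "n \<noteq> 0"
    and "of_nat n * x = of_nat n * (y::'a)"
  shows "x = y"
proof -
  have "of_int (int n) * (x - y) = 0" using assms(3) by (simp add: algebra_simps)
  moreover have "int n \<noteq> 0" using assms(2) by simp
  moreover have "\<forall>(n::int) (a::'a). n \<noteq> 0 \<longrightarrow> of_int n * a = 0 \<longrightarrow> a = 0"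
    using assms(1) unfolding torsion_free_Zp_algebra_def by (elim conjE)
  ultimately have "x - y = 0" by blast
  then show ?thesis by simp
qed

lemma tf_inv:
  assumes "torsion_free_Zp_algebra p TYPE('a::comm_ring_1)" "\<not> p dvd w"
  shows "\<exists>b::'a. of_nat w * b = 1"
proof -
  have "\<not> int p dvd int w" using assms(2) by simp
  moreover have "\<forall>n::int. \<not> int p dvd n \<longrightarrow> (\<exists>b::'a. of_int n * b = 1)"
    using assms(1) unfolding torsion_free_Zp_algebra_def by (elim conjE)
  ultimately obtain b :: 'a where "of_int (int w) * b = 1" by blast
  then show ?thesis by auto
qed

lemma ideal_mult: "is_ideal I \<Longrightarrow> a \<in> I \<Longrightarrow> r * a \<in> I"
  by (simp add: is_ideal_def)
lemma ideal_mult2: "is_ideal I \<Longrightarrow> a \<in> I \<Longrightarrow> a * r \<in> I"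
  by (metis ideal_mult mult.commute)
lemma ideal_add: "is_ideal I \<Longrightarrow> a \<in> I \<Longrightarrow> b \<in> I \<Longrightarrow> a + b \<in> I"
  by (simp add: is_ideal_def)
lemma ideal_zero: "is_ideal I \<Longrightarrow> 0 \<in> I"
  by (simp add: is_ideal_def)
lemma ideal_uminus: "is_ideal I \<Longrightarrow> a \<in> I \<Longrightarrow> - a \<in> I"
  using ideal_mult[of I a "-1"] by simp
lemma ideal_diff: "is_ideal I \<Longrightarrow> a \<in> I \<Longrightarrow> b \<in> I \<Longrightarrow> a - b \<in> I"
  using ideal_add[of I a "-b"] ideal_uminus by auto
lemma ideal_sum: "is_ideal I \<Longrightarrow> (\<And>x. x \<in> S \<Longrightarrow> f x \<in> I) \<Longrightarrow> sum f S \<in> I"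
  by (induction S rule: infinite_finite_induct) (auto simp: ideal_zero ideal_add)

lemma pow_fact:
  assumes "prime p" "torsion_free_Zp_algebra p TYPE('a::comm_ring_1)"
    and "divided_power_ideal p I"
  shows "a \<in> I \<Longrightarrow> k \<ge> 1 \<Longrightarrow> \<exists>c\<in>I. a ^ k = of_nat (fact k) * (c::'a)"
proof (induction k arbitrary: a rule: less_induct)
  case (less k)
  have id: "is_ideal I" using assms(3) by (simp add: divided_power_ideal_def)
  have p1: "p > 1" using assms(1) prime_gt_1_nat by blast
  obtain w where w: "fact k = p ^ (k div p) * fact (k div p) * w" "\<not> p dvd w"
    using fact_split[OF assms(1)] by blast
  obtain v :: 'a where v: "of_nat w * v = 1" using tf_inv[OF assms(2) w(2)] by blast
  have akI: "a ^ k \<in> I"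
  proof -
    have "a ^ k = a * a ^ (k - 1)" using less.prems(2)
      by (metis One_nat_def Suc_pred not_one_le_zero not_gr0 power_Suc)
    then show ?thesis using ideal_mult2[OF id less.prems(1)] by simp
  qed
  show ?case
  proof (cases "k div p = 0")
    case True
    then have "fact k = w" using w by simp
    then have "a ^ k = of_nat (fact k) * (v * a ^ k)" using v
      by (metis mult.assoc mult_1)
    then show ?thesis using ideal_mult[OF id akI] by blast
  next
    case False
    define q where "q = k div p"
    define r where "r = k mod p"
    have q1: "q \<ge> 1" using False q_def by simp
    have qk: "q < k" using q_def p1 less.prems(2) by simp
    obtain b where b: "b \<in> I" "a ^ p = of_nat p * b"
      using assms(3) less.prems(1) unfolding divided_power_ideal_def nat_mult_set_def by blast
    obtain c where c: "c \<in> I" "b ^ q = of_nat (fact q) * c"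
      using less.IH[OF qk b(1) q1] by blast
    have "a ^ k = a ^ r * (a ^ p) ^ q"
      by (simp add: q_def r_def power_add[symmetric] power_mult[symmetric] mult.commute)
    also have "\<dots> = of_nat (p ^ q * fact q) * (a ^ r * c)"
      using b c by (simp add: power_mult_distrib algebra_simps)
    also have "\<dots> = of_nat (p ^ q * fact q) * (of_nat w * v) * (a ^ r * c)"
      using v by simp
    also have "\<dots> = of_nat (fact k) * (v * (a ^ r * c))"
      using w(1) by (simp add: q_def algebra_simps)
    finally show ?thesis using ideal_mult[OF id c(1)] ideal_mult[OF id] by (metis mult.assoc)
  qed
qed


definition gam :: "'a::comm_ring_1 set \<Rightarrow> 'a \<Rightarrow> nat \<Rightarrow> 'a" where
  "gam I a k = (if k = 0 then 1 else SOME c. c \<in> I \<and> a ^ k = of_nat (fact k) * c)"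

context
  fixes p :: nat and I :: "'a::comm_ring_1 set"
  assumes pr: "prime p" and tf: "torsion_free_Zp_algebra p TYPE('a)"
    and dp: "divided_power_ideal p I"
begin

lemma idl: "is_ideal I" using dp by (simp add: divided_power_ideal_def)

lemma gam_props:
  assumes "a \<in> I"
  shows "a ^ k = of_nat (fact k) * gam I a k" "k \<ge> 1 \<Longrightarrow> gam I a k \<in> I"
proof -
  have "k \<ge> 1 \<Longrightarrow> gam I a k \<in> I \<and> a ^ k = of_nat (fact k) * gam I a k"
  proof -
    assume k: "k \<ge> 1"
    then have "\<exists>c. c \<in> I \<and> a ^ k = of_nat (fact k) * c" using pow_fact[OF pr tf dp assms] by blast
    from someI_ex[OF this] show ?thesis using k unfolding gam_def by simp
  qed
  then show "a ^ k = of_nat (fact k) * gam I a k" "k \<ge> 1 \<Longrightarrow> gam I a k \<in> I"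
    by (cases k; simp add: gam_def)+
qed

lemma gam_rec:
  assumes "a \<in> I" "k \<ge> 1"
  shows "of_nat k * gam I a k = a * gam I a (k - 1)"
proof -
  obtain m where m: "k = Suc m" using assms(2) by (cases k) auto
  have "of_nat (fact m) * (of_nat k * gam I a k) = of_nat (fact k) * gam I a k"
    by (simp add: m fact_Suc algebra_simps)
  also have "\<dots> = a * a ^ m" using gam_props(1)[OF assms(1), of k] m by simp
  also have "\<dots> = of_nat (fact m) * (a * gam I a (k - 1))"
    using gam_props(1)[OF assms(1), of m] m by (simp add: algebra_simps)
  finally show ?thesis using tf_cancel[OF tf] by (metis fact_nonzero)
qed

definition Eser :: "'a \<Rightarrow> nat \<Rightarrow> 'a fps" where
  "Eser a j = Abs_fps (\<lambda>i. if j dvd i then gam I a (i div j) else 0)"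

lemma Eser_0: "Eser a j $ 0 = 1"
  by (simp add: Eser_def gam_def)

lemma Eser_I: "a \<in> I \<Longrightarrow> j \<ge> 1 \<Longrightarrow> i \<ge> 1 \<Longrightarrow> Eser a j $ i \<in> I"
  using gam_props(2)[of a "i div j"] ideal_zero[OF idl]
  by (auto simp: Eser_def elim!: dvdE)

lemma Eser_DD:
  assumes "a \<in> I" "j \<ge> 1"
  shows "DD (Eser a j) = fps_const (of_nat j * a) * fps_X ^ j * Eser a j"
proof (rule fps_ext)
  fix i
  have r: "(fps_const (of_nat j * a) * fps_X ^ j * Eser a j) $ i
     = of_nat j * a * (if i < j then 0 else Eser a j $ (i - j))"
    by (simp add: mult.assoc fps_X_power_mult_nth)
  show "DD (Eser a j) $ i = (fps_const (of_nat j * a) * fps_X ^ j * Eser a j) $ i"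
  proof (cases "j dvd i")
    case True
    then obtain k where k: "i = j * k" by blast
    show ?thesis
    proof (cases "k = 0")
      case True then show ?thesis using k assms r by (simp add: DD_nth)
    next
      case False
      have "i - j = j * (k - 1)" using k False by (simp add: algebra_simps)
      then have "Eser a j $ (i - j) = gam I a (k - 1)" using assms by (simp add: Eser_def)
      moreover have "\<not> i < j" using k False by simp
      moreover have "Eser a j $ i = gam I a k" using k assms by (simp add: Eser_def)
      ultimately show ?thesis using r gam_rec[OF assms(1), of k] False k
        by (simp add: DD_nth algebra_simps)
    qed
  next
    case False
    have "\<not> i < j \<Longrightarrow> \<not> j dvd (i - j)" using False
      by (metis dvd_minus_self le_add_diff_inverse not_less dvd_add_right_iff add.commute)
    then show ?thesis using False r by (simp add: DD_nth Eser_def)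
  qed
qed

end

definition Iser :: "'a::comm_ring_1 set \<Rightarrow> 'a fps \<Rightarrow> bool" where
  "Iser I f \<longleftrightarrow> (\<forall>k. f $ k \<in> I)"

lemma Iser_mult: "is_ideal I \<Longrightarrow> Iser I f \<Longrightarrow> Iser I (g * f)"
  unfolding Iser_def fps_mult_nth by (auto intro!: ideal_sum ideal_mult)
lemma Iser_mult2: "is_ideal I \<Longrightarrow> Iser I f \<Longrightarrow> Iser I (f * g)"
  using Iser_mult by (metis mult.commute)
lemma Iser_add: "is_ideal I \<Longrightarrow> Iser I f \<Longrightarrow> Iser I g \<Longrightarrow> Iser I (f + g)"
  unfolding Iser_def by (auto intro!: ideal_add)

lemma Iser_prod:
  assumes "is_ideal I" "finite J" "\<And>j. j \<in> J \<Longrightarrow> Iser I (f j - 1)"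
  shows "Iser I (prod f J - 1)"
  using assms(2,3)
proof (induction J rule: finite_induct)
  case empty then show ?case using assms(1) by (simp add: Iser_def ideal_zero)
next
  case (insert x F)
  have eq: "prod f (insert x F) - 1 = (f x - 1) * prod f F + (prod f F - 1)"
    using insert by (simp add: algebra_simps)
  have "Iser I ((f x - 1) * prod f F + (prod f F - 1))"
    using insert assms(1) by (intro Iser_add Iser_mult2) auto
  then show ?case by (simp only: eq)
qed

lemma prod_nth0: "finite J \<Longrightarrow> (\<forall>j\<in>J. f j $ 0 = 1) \<Longrightarrow> prod f J $ 0 = (1::'a::comm_ring_1)"
  by (induction J rule: finite_induct) auto

lemma DD_prod:
  assumes "finite J" "\<And>j. j \<in> J \<Longrightarrow> DD (f j) = g j * f j"
  shows "DD (prod f J) = sum g J * prod f J"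
  using assms
proof (induction J rule: finite_induct)
  case empty then show ?case by (simp add: DD_def)
next
  case (insert x F)
  then show ?case by (simp add: DD_mult algebra_simps)
qed


definition Et :: "'a::comm_ring_1 poly \<Rightarrow> 'a fps" where
  "Et P = Abs_fps (\<lambda>n. (-1) ^ n * esym P n)"
definition Sp :: "'a::comm_ring_1 poly \<Rightarrow> 'a fps" where
  "Sp P = Abs_fps (\<lambda>n. psum P n)"

lemma psum_0: "psum P 0 = 0"
  by (simp add: psum.simps)

lemma Et_0: "lead_coeff P = 1 \<Longrightarrow> Et P $ 0 = 1"
  by (simp add: Et_def esym_def)

lemma newton:
  assumes "lead_coeff (P::'a::comm_ring_1 poly) = 1"
  shows "DD (Et P) = - (Sp P * Et P)"
proof (rule fps_ext)
  fix n
  show "DD (Et P) $ n = (- (Sp P * Et P)) $ n"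
  proof (cases n)
    case 0 then show ?thesis by (simp add: DD_nth Sp_def psum_0)
  next
    case (Suc m)
    define t where "t i = Et P $ i * Sp P $ (n - i)" for i
    have "(Sp P * Et P) $ n = (Et P * Sp P) $ n" by (simp add: mult.commute)
    also have "\<dots> = sum t {0..n}" by (simp add: fps_mult_nth t_def)
    also have "\<dots> = t 0 + sum t {1..m} + t n"
      using Suc by (simp add: sum.atLeast0_atMost_Suc sum.atLeast_Suc_atMost)
    also have "t 0 = psum P n" using assms by (simp add: t_def Et_def Sp_def esym_def)
    also have "t n = 0" by (simp add: t_def Sp_def psum_0)
    finally have A: "(Sp P * Et P) $ n = psum P n + sum t {1..m}" by simp
    have B: "psum P n = (\<Sum>i\<in>{1..m}. (-1) ^ (i - 1) * esym P i * psum P (n - i))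
       + (-1) ^ (n - 1) * of_nat n * esym P n"
      using Suc by (subst psum.simps) (simp add: atLeastLessThanSuc_atLeastAtMost)
    have C: "(\<Sum>i\<in>{1..m}. (-1) ^ (i - 1) * esym P i * psum P (n - i)) + sum t {1..m} = 0"
    proof -
      have "(\<Sum>i\<in>{1..m}. (-1) ^ (i - 1) * esym P i * psum P (n - i)) + sum t {1..m}
          = (\<Sum>i\<in>{1..m}. (-1) ^ (i - 1) * esym P i * psum P (n - i) + t i)"
        by (simp add: sum.distrib)
      also have "\<dots> = 0"
      proof (rule sum.neutral, rule ballI)
        fix i assume "i \<in> {1..m}"
        then obtain j where j: "i = Suc j" by (cases i) auto
        show "(-1) ^ (i - 1) * esym P i * psum P (n - i) + t i = 0"
          by (simp add: t_def Et_def Sp_def j)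
      qed
      finally show ?thesis .
    qed
    have "(Sp P * Et P) $ n = (-1) ^ (n - 1) * of_nat n * esym P n"
      using A B C by (simp add: algebra_simps)
    then show ?thesis using Suc by (simp add: DD_nth Et_def)
  qed
qed

lemma ode_unique:
  assumes tf: "torsion_free_Zp_algebra p TYPE('a::comm_ring_1)"
    and X: "DD X = H * X" and Y: "DD Y = K * (Y::'a fps)"
    and "X $ 0 = Y $ 0" "H $ 0 = 0" "K $ 0 = 0" "\<forall>j\<le>m. H $ j = K $ j"
  shows "k \<le> m \<Longrightarrow> X $ k = Y $ k"
proof (induction k rule: less_induct)
  case (less k)
  show ?case
  proof (cases "k = 0")
    case True then show ?thesis using assms by simp
  next
    case False
    have "of_nat k * X $ k = (\<Sum>i=0..k. H $ i * X $ (k - i))"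
      using arg_cong[OF X, of "\<lambda>f. f $ k"] by (simp add: DD_nth fps_mult_nth)
    also have "\<dots> = (\<Sum>i=0..k. K $ i * Y $ (k - i))"
    proof (rule sum.cong[OF refl])
      fix i assume i: "i \<in> {0..k}"
      show "H $ i * X $ (k - i) = K $ i * Y $ (k - i)"
      proof (cases "i = 0")
        case True then show ?thesis using assms by simp
      next
        case False
        then have "X $ (k - i) = Y $ (k - i)" using less.IH[of "k - i"] less.prems i by auto
        moreover have "H $ i = K $ i" using assms(7) i less.prems by auto
        ultimately show ?thesis by simp
      qed
    qed
    also have "\<dots> = of_nat k * Y $ k"
      using arg_cong[OF Y, of "\<lambda>f. f $ k"] by (simp add: DD_nth fps_mult_nth)
    finally show ?thesis using tf_cancel[OF tf False] by blast
  qed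
qed


lemma Fser_nth:
  assumes "finite J"
  shows "(\<Sum>j\<in>J. fps_const (c j) * fps_X ^ j) $ k = (if k \<in> J then c k else (0::'a::comm_ring_1))"
proof -
  have "(\<Sum>j\<in>J. fps_const (c j) * fps_X ^ j) $ k = (\<Sum>j\<in>J. if j = k then c j else 0)"
    by (simp add: fps_sum_nth if_distrib eq_commute cong: if_cong)
  also have "\<dots> = (if k \<in> J then c k else 0)" using assms by (simp add: sum.delta)
  finally show ?thesis .
qed

lemma sign_I: "is_ideal I \<Longrightarrow> x \<in> I \<longleftrightarrow> (-1) ^ n * x \<in> I"
proof
  assume "is_ideal I" "(-1) ^ n * x \<in> I"
  then have "(-1) ^ n * ((-1) ^ n * x) \<in> I" by (rule ideal_mult)
  then show "x \<in> I" by (simp flip: mult.assoc power_mult_distrib)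
qed (simp add: ideal_mult)

lemma Et_diff: "Et P $ n - Et Q $ n = (-1) ^ n * (esym P n - esym Q n)"
  by (simp add: Et_def algebra_simps)

lemma nms_iff: "x \<in> nat_mult_set n I \<longleftrightarrow> (\<exists>a. a \<in> I \<and> x = of_nat n * a)"
  by (auto simp: nat_mult_set_def)

context
  fixes p :: nat and I :: "'a::comm_ring_1 set"
  assumes pr: "prime p" and tf: "torsion_free_Zp_algebra p TYPE('a)"
    and dp: "divided_power_ideal p I"
begin

lemma idl': "is_ideal I" using dp by (simp add: divided_power_ideal_def)

lemma Eser_Iser: "b \<in> I \<Longrightarrow> j \<ge> 1 \<Longrightarrow> Iser I (Eser I b j - 1)"
  unfolding Iser_def
proof
  fix k assume b: "b \<in> I" "j \<ge> 1"
  show "(Eser I b j - 1) $ k \<in> I"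
  proof (cases "k = 0")
    case True then show ?thesis using Eser_0[OF pr tf dp] ideal_zero[OF idl'] by simp
  next
    case False then show ?thesis using Eser_I[OF pr tf dp b, of k] by simp
  qed
qed

lemma prod_facts:
  assumes "finite J" "\<And>j. j \<in> J \<Longrightarrow> b j \<in> I \<and> j \<ge> 1"
  shows "DD (\<Prod>j\<in>J. Eser I (b j) j) = (\<Sum>j\<in>J. fps_const (of_nat j * b j) * fps_X ^ j) * (\<Prod>j\<in>J. Eser I (b j) j)"
    and "(\<Prod>j\<in>J. Eser I (b j) j) $ 0 = 1"
    and "Iser I ((\<Prod>j\<in>J. Eser I (b j) j) - 1)"
proof -
  show "DD (\<Prod>j\<in>J. Eser I (b j) j) = (\<Sum>j\<in>J. fps_const (of_nat j * b j) * fps_X ^ j) * (\<Prod>j\<in>J. Eser I (b j) j)"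
    by (rule DD_prod[OF assms(1)]) (use assms(2) Eser_DD[OF pr tf dp] in auto)
  show "(\<Prod>j\<in>J. Eser I (b j) j) $ 0 = 1"
    by (rule prod_nth0[OF assms(1)]) (simp add: Eser_0[OF pr tf dp])
  show "Iser I ((\<Prod>j\<in>J. Eser I (b j) j) - 1)"
    by (rule Iser_prod[OF idl' assms(1)]) (use assms(2) Eser_Iser in auto)
qed

lemma mainA:
  assumes mP: "lead_coeff P = 1" and mQ: "lead_coeff (Q::'a poly) = 1"
  shows "(\<forall>n. 1 \<le> n \<and> n \<le> m \<longrightarrow> esym P n - esym Q n \<in> I) \<longleftrightarrow>
         (\<forall>n. 1 \<le> n \<and> n \<le> m \<longrightarrow> psum P n - psum Q n \<in> nat_mult_set n I)"
proof
  assume H: "\<forall>n. 1 \<le> n \<and> n \<le> m \<longrightarrow> esym P n - esym Q n \<in> I"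
  have HE: "Et P $ n - Et Q $ n \<in> I" if "n \<le> m" for n
  proof (cases "n = 0")
    case True then show ?thesis using ideal_zero[OF idl'] Et_0[OF mP] Et_0[OF mQ] by simp
  next
    case False then show ?thesis using H that sign_I[OF idl'] Et_diff[of P n Q] by auto
  qed
  have "psum P n - psum Q n \<in> nat_mult_set n I" if "1 \<le> n" "n \<le> m" for n
    using that
  proof (induction n rule: less_induct)
    case (less n)
    define aa where "aa j = (SOME a. a \<in> I \<and> psum P j - psum Q j = of_nat j * a)" for j
    have aa: "aa j \<in> I \<and> psum P j - psum Q j = of_nat j * aa j" if "1 \<le> j" "j < n" for j
    proof -
      have "\<exists>a. a \<in> I \<and> psum P j - psum Q j = of_nat j * a"
        using less.IH[of j] that less.prems by (auto simp: nms_iff)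
      from someI_ex[OF this] show ?thesis unfolding aa_def .
    qed
    define W where "W = (\<Prod>j\<in>{1..<n}. Eser I (aa j) j)"
    define F where "F = (\<Sum>j\<in>{1..<n}. fps_const (of_nat j * aa j) * fps_X ^ j)"
    have facts: "DD W = F * W" "W $ 0 = 1" "Iser I (W - 1)"
      using prod_facts[of "{1..<n}" aa] aa unfolding W_def F_def by auto
    have Fn: "F $ k = (if k \<in> {1..<n} then of_nat k * aa k else 0)" for k
      unfolding F_def by (rule Fser_nth) simp
    define X where "X = W * Et P"
    have DX: "DD X = (F - Sp P) * X"
      unfolding X_def using facts(1) newton[OF mP] by (simp add: DD_mult algebra_simps)
    have DY: "DD (Et Q) = (- Sp Q) * Et Q" using newton[OF mQ] by simp
    have eq: "X $ k = Et Q $ k" if "k \<le> n - 1" for k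
    proof (rule ode_unique[OF tf DX DY _ _ _ _ that])
      show "X $ 0 = Et Q $ 0" using facts(2) Et_0[OF mP] Et_0[OF mQ] by (simp add: X_def)
      show "(F - Sp P) $ 0 = 0" using Fn[of 0] by (simp add: Sp_def psum_0)
      show "(- Sp Q) $ 0 = 0" by (simp add: Sp_def psum_0)
      show "\<forall>j\<le>n - 1. (F - Sp P) $ j = (- Sp Q) $ j"
      proof (intro allI impI)
        fix j assume j: "j \<le> n - 1"
        show "(F - Sp P) $ j = (- Sp Q) $ j"
        proof (cases "j = 0")
          case True then show ?thesis using Fn[of 0] by (simp add: Sp_def psum_0)
        next
          case False
          then have "1 \<le> j" "j < n" using j less.prems by auto
          then show ?thesis using aa[of j] Fn[of j] by (simp add: Sp_def algebra_simps)
        qed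
      qed
    qed
    define d where "d i = (F - Sp P) $ i * X $ (n - i) - (- Sp Q) $ i * Et Q $ (n - i)" for i
    have "of_nat n * X $ n - of_nat n * Et Q $ n = sum d {0..n}"
      using arg_cong[OF DX, of "\<lambda>f. f $ n"] arg_cong[OF DY, of "\<lambda>f. f $ n"]
      by (simp add: DD_nth fps_mult_nth d_def sum_subtractf sum.distrib)
    also have "{0..n} = insert n {0..<n}" by auto
    also have "sum d (insert n {0..<n}) = d n + sum d {0..<n}" by simp
    also have "sum d {0..<n} = 0"
    proof (rule sum.neutral, rule ballI)
      fix i assume i: "i \<in> {0..<n}"
      show "d i = 0"
      proof (cases "i = 0")
        case True then show ?thesis using Fn[of 0] by (simp add: d_def Sp_def psum_0)
      next
        case False
        then have "1 \<le> i" "i < n" using i by auto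
        moreover have "X $ (n - i) = Et Q $ (n - i)" using eq[of "n - i"] \<open>1 \<le> i\<close> by simp
        ultimately show ?thesis using aa[of i] Fn[of i] by (simp add: d_def Sp_def algebra_simps)
      qed
    qed
    also have "d n = - (psum P n - psum Q n)"
      using Fn[of n] facts(2) Et_0[OF mP] Et_0[OF mQ] by (simp add: d_def Sp_def X_def)
    finally have key: "psum P n - psum Q n = of_nat n * (Et Q $ n - X $ n)"
      by (simp add: algebra_simps)
    have "X = Et P + (W - 1) * Et P" unfolding X_def by (simp add: algebra_simps)
    then have "Et Q $ n - X $ n = - (Et P $ n - Et Q $ n) - ((W - 1) * Et P) $ n" by simp
    moreover have "Et P $ n - Et Q $ n \<in> I" using HE less.prems by simp
    moreover have "((W - 1) * Et P) $ n \<in> I"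
      using Iser_mult2[OF idl' facts(3)] unfolding Iser_def by blast
    ultimately have "Et Q $ n - X $ n \<in> I"
      using ideal_diff[OF idl'] ideal_uminus[OF idl'] by metis
    then show ?case using key by (auto simp: nms_iff)
  qed
  then show "\<forall>n. 1 \<le> n \<and> n \<le> m \<longrightarrow> psum P n - psum Q n \<in> nat_mult_set n I" by blast
next
  assume H: "\<forall>n. 1 \<le> n \<and> n \<le> m \<longrightarrow> psum P n - psum Q n \<in> nat_mult_set n I"
  define aa where "aa j = (SOME a. a \<in> I \<and> psum P j - psum Q j = of_nat j * a)" for j
  have aa: "aa j \<in> I \<and> psum P j - psum Q j = of_nat j * aa j" if "1 \<le> j" "j \<le> m" for j
  proof -
    have "\<exists>a. a \<in> I \<and> psum P j - psum Q j = of_nat j * a"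
      using H that by (auto simp: nms_iff)
    from someI_ex[OF this] show ?thesis unfolding aa_def .
  qed
  define V where "V = (\<Prod>j\<in>{1..m}. Eser I (- aa j) j)"
  define F where "F = (\<Sum>j\<in>{1..m}. fps_const (of_nat j * (- aa j)) * fps_X ^ j)"
  have facts: "DD V = F * V" "V $ 0 = 1" "Iser I (V - 1)"
    using prod_facts[of "{1..m}" "\<lambda>j. - aa j"] aa ideal_uminus[OF idl'] unfolding V_def F_def by auto
  have Fn: "F $ k = (if k \<in> {1..m} then of_nat k * (- aa k) else 0)" for k
    unfolding F_def by (rule Fser_nth) simp
  define X where "X = V * Et Q"
  have DX: "DD X = (F - Sp Q) * X"
    unfolding X_def using facts(1) newton[OF mQ] by (simp add: DD_mult algebra_simps)
  have DY: "DD (Et P) = (- Sp P) * Et P" using newton[OF mP] by simp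
  have eq: "X $ k = Et P $ k" if "k \<le> m" for k
  proof (rule ode_unique[OF tf DX DY _ _ _ _ that])
    show "X $ 0 = Et P $ 0" using facts(2) Et_0[OF mP] Et_0[OF mQ] by (simp add: X_def)
    show "(F - Sp Q) $ 0 = 0" using Fn[of 0] by (simp add: Sp_def psum_0)
    show "(- Sp P) $ 0 = 0" by (simp add: Sp_def psum_0)
    show "\<forall>j\<le>m. (F - Sp Q) $ j = (- Sp P) $ j"
    proof (intro allI impI)
      fix j assume j: "j \<le> m"
      show "(F - Sp Q) $ j = (- Sp P) $ j"
      proof (cases "j = 0")
        case True then show ?thesis using Fn[of 0] by (simp add: Sp_def psum_0)
      next
        case False
        then have "1 \<le> j" using j by auto
        then show ?thesis using aa[of j] Fn[of j] j by (simp add: Sp_def algebra_simps)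
      qed
    qed
  qed
  show "\<forall>n. 1 \<le> n \<and> n \<le> m \<longrightarrow> esym P n - esym Q n \<in> I"
  proof (intro allI impI)
    fix n assume n: "1 \<le> n \<and> n \<le> m"
    have "X - Et Q = (V - 1) * Et Q" unfolding X_def by (simp add: algebra_simps)
    then have "Et P $ n - Et Q $ n = ((V - 1) * Et Q) $ n" using eq[of n] n
      by (metis fps_sub_nth)
    moreover have "((V - 1) * Et Q) $ n \<in> I"
      using Iser_mult2[OF idl' facts(3)] unfolding Iser_def by blast
    ultimately have "(-1) ^ n * (esym P n - esym Q n) \<in> I" by (simp add: Et_diff)
    then show "esym P n - esym Q n \<in> I" using sign_I[OF idl'] by blast
  qed
qed

end

theorem theorem2p7:
  fixes p :: nat and I :: "'a::comm_ring_1 set" and P Q :: "'a poly"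
  assumes "prime p"
    and "torsion_free_Zp_algebra p TYPE('a)"
    and "divided_power_ideal p I"
    and "lead_coeff P = 1" and "lead_coeff Q = 1"
  defines "N \<equiv> max (degree P) (degree Q)"
  shows "((\<forall>n\<ge>1. esym P n - esym Q n \<in> I) \<longleftrightarrow>
           (\<forall>n. 1 \<le> n \<and> n \<le> N \<longrightarrow> esym P n - esym Q n \<in> I))
       \<and> ((\<forall>n. 1 \<le> n \<and> n \<le> N \<longrightarrow> esym P n - esym Q n \<in> I) \<longleftrightarrow>
           (\<forall>n\<ge>1. psum P n - psum Q n \<in> nat_mult_set n I))
       \<and> ((\<forall>n\<ge>1. psum P n - psum Q n \<in> nat_mult_set n I) \<longleftrightarrow>
           (\<forall>n. 1 \<le> n \<and> n \<le> N \<longrightarrow> psum P n - psum Q n \<in> nat_mult_set n I))"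
proof -
  have idI: "is_ideal I" using assms(3) by (simp add: divided_power_ideal_def)
  note A = mainA[OF assms(1,2,3,4,5)]
  have Z: "(\<forall>n\<ge>1. esym P n - esym Q n \<in> I) \<longleftrightarrow>
           (\<forall>n. 1 \<le> n \<and> n \<le> N \<longrightarrow> esym P n - esym Q n \<in> I)"
  proof
    assume H: "\<forall>n. 1 \<le> n \<and> n \<le> N \<longrightarrow> esym P n - esym Q n \<in> I"
    show "\<forall>n\<ge>1. esym P n - esym Q n \<in> I"
    proof (intro allI impI)
      fix n :: nat assume n: "n \<ge> 1"
      show "esym P n - esym Q n \<in> I"
      proof (cases "n \<le> N")
        case True then show ?thesis using H n by blast
      next
        case False
        then have "esym P n = 0" "esym Q n = 0" by (auto simp: esym_def N_def)
        then show ?thesis using ideal_zero[OF idI] by simp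
      qed
    qed
  qed auto
  have R13: "(\<forall>n\<ge>1. esym P n - esym Q n \<in> I) \<longleftrightarrow>
             (\<forall>n\<ge>1. psum P n - psum Q n \<in> nat_mult_set n I)"
  proof
    assume H: "\<forall>n\<ge>1. esym P n - esym Q n \<in> I"
    show "\<forall>n\<ge>1. psum P n - psum Q n \<in> nat_mult_set n I"
    proof (intro allI impI)
      fix n :: nat assume n: "n \<ge> 1"
      have "\<forall>k. 1 \<le> k \<and> k \<le> n \<longrightarrow> esym P k - esym Q k \<in> I" using H by blast
      then show "psum P n - psum Q n \<in> nat_mult_set n I" using A[of n] n by blast
    qed
  next
    assume H: "\<forall>n\<ge>1. psum P n - psum Q n \<in> nat_mult_set n I"
    show "\<forall>n\<ge>1. esym P n - esym Q n \<in> I"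
    proof (intro allI impI)
      fix n :: nat assume n: "n \<ge> 1"
      have "\<forall>k. 1 \<le> k \<and> k \<le> n \<longrightarrow> psum P k - psum Q k \<in> nat_mult_set k I" using H by blast
      then show "esym P n - esym Q n \<in> I" using A[of n] n by blast
    qed
  qed
  have R24: "(\<forall>n. 1 \<le> n \<and> n \<le> N \<longrightarrow> esym P n - esym Q n \<in> I) \<longleftrightarrow>
           (\<forall>n. 1 \<le> n \<and> n \<le> N \<longrightarrow> psum P n - psum Q n \<in> nat_mult_set n I)"
    by (rule A)
  show ?thesis using Z R13 R24 by blast
qed

end
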